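(* Let $\mathfrak{g}=(V,[\,,])$ be a $2$-step nilpotent Lie algebra over $K$ and let $x\cdot y$ be a pre-Lie algebra structure on $\mathfrak{g}$. Then $x\circ y=\frac12(x\cdot y+y\cdot x)$ defines a CPA-structure on $\mathfrak{g}$ if and only if every left multiplication $L(x)$, $L(x)(y)=x\cdot y$, is a derivation of $\mathfrak{g}$. If in this situation (all $L(x)$ derivations) moreover $Z(\mathfrak{g})\subseteq[\mathfrak{g},\mathfrak{g}]$, then all $L(x)$ are nilpotent.
   Context: $K$ is a field of characteristic zero and $V$ a finite-dimensional $K$-vector space. A pre-Lie algebra structure on a Lie algebra $\mathfrak{g}=(V,[\,,])$ is a bilinear product $x\cdot y$ on $V$ with $x\cdot y-y\cdot x=[x,y]$ and $[x,y]\cdot z=x\cdot(y\cdot z)-y\cdot(x\cdot z)$ for all $x,y,z$. A commutative post-Lie algebra structure (CPA-structure) on a Lie algebra $(V,[\,,])$ is a bilinear product $x\circ y$ on $V$ with $x\circ y=y\circ x$, $[x,y]\circ z=x\circ(y\circ z)-y\circ(x\circ z)$, and $x\circ[y,z]=[x\circ y,z]+[y,x\circ z]$ for all $x,y,z$. A Lie algebra is called $2$-step nilpotent here if it is nilpotent of class at most $2$, i.e. all brackets $[[x,y],z]$ vanish. $Z(\mathfrak{g})$ denotes the center. *)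

theory Defs
  imports Complex_Main
begin

definition bilinear_prod :: "('k::field \<Rightarrow> 'v::ab_group_add \<Rightarrow> 'v) \<Rightarrow> ('v \<Rightarrow> 'v \<Rightarrow> 'v) \<Rightarrow> bool" where
  "bilinear_prod sc m \<longleftrightarrow>
     (\<forall>x. Vector_Spaces.linear sc sc (m x)) \<and> (\<forall>y. Vector_Spaces.linear sc sc (\<lambda>x. m x y))"

definition lie_algebra :: "('k::field \<Rightarrow> 'v::ab_group_add \<Rightarrow> 'v) \<Rightarrow> ('v \<Rightarrow> 'v \<Rightarrow> 'v) \<Rightarrow> bool" where
  "lie_algebra sc br \<longleftrightarrow> bilinear_prod sc br \<and> (\<forall>x. br x x = 0) \<and>
     (\<forall>x y z. br x (br y z) + br y (br z x) + br z (br x y) = 0)"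

definition two_step_nilpotent :: "('v \<Rightarrow> 'v \<Rightarrow> 'v::ab_group_add) \<Rightarrow> bool" where
  "two_step_nilpotent br \<longleftrightarrow> (\<forall>x y z. br (br x y) z = 0)"

definition pre_lie_structure :: "('k::field \<Rightarrow> 'v::ab_group_add \<Rightarrow> 'v) \<Rightarrow> ('v \<Rightarrow> 'v \<Rightarrow> 'v) \<Rightarrow> ('v \<Rightarrow> 'v \<Rightarrow> 'v) \<Rightarrow> bool" where
  "pre_lie_structure sc br p \<longleftrightarrow> bilinear_prod sc p \<and>
     (\<forall>x y. p x y - p y x = br x y) \<and>
     (\<forall>x y z. p (br x y) z = p x (p y z) - p y (p x z))"

definition CPA_structure :: "('k::field \<Rightarrow> 'v::ab_group_add \<Rightarrow> 'v) \<Rightarrow> ('v \<Rightarrow> 'v \<Rightarrow> 'v) \<Rightarrow> ('v \<Rightarrow> 'v \<Rightarrow> 'v) \<Rightarrow> bool" where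
  "CPA_structure sc br c \<longleftrightarrow> bilinear_prod sc c \<and>
     (\<forall>x y. c x y = c y x) \<and>
     (\<forall>x y z. c (br x y) z = c x (c y z) - c y (c x z)) \<and>
     (\<forall>x y z. c x (br y z) = br (c x y) z + br y (c x z))"

definition lie_derivation :: "('k::field \<Rightarrow> 'v::ab_group_add \<Rightarrow> 'v) \<Rightarrow> ('v \<Rightarrow> 'v \<Rightarrow> 'v) \<Rightarrow> ('v \<Rightarrow> 'v) \<Rightarrow> bool" where
  "lie_derivation sc br D \<longleftrightarrow> Vector_Spaces.linear sc sc D \<and>
     (\<forall>x y. D (br x y) = br (D x) y + br x (D y))"

definition lie_center :: "('v \<Rightarrow> 'v \<Rightarrow> 'v::ab_group_add) \<Rightarrow> 'v set" where
  "lie_center br = {z. \<forall>x. br z x = 0}"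

definition derived_algebra :: "('k::field \<Rightarrow> 'v::ab_group_add \<Rightarrow> 'v) \<Rightarrow> ('v \<Rightarrow> 'v \<Rightarrow> 'v) \<Rightarrow> 'v set" where
  "derived_algebra sc br = module.span sc {br x y | x y. True}"

definition nilpotent_map :: "('v \<Rightarrow> 'v::zero) \<Rightarrow> bool" where
  "nilpotent_map f \<longleftrightarrow> (\<exists>n. (f ^^ n) = (\<lambda>_. 0))"

end

theory Submission imports Defs begin

locale PL = vector_space sc for sc :: "'k::field_char_0 \<Rightarrow> 'v::ab_group_add \<Rightarrow> 'v" +
  fixes br p :: "'v \<Rightarrow> 'v \<Rightarrow> 'v"
  assumes bra1: "br (x+y) z = br x z + br y z" and bra2: "br x (y+z) = br x y + br x z"
  and brs1: "br (sc c x) y = sc c (br x y)" and brs2: "br x (sc c y) = sc c (br x y)"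
  and pa1: "p (x+y) z = p x z + p y z" and pa2: "p x (y+z) = p x y + p x z"
  and ps1: "p (sc c x) y = sc c (p x y)" and ps2: "p x (sc c y) = sc c (p x y)"
  and nil: "br (br x y) z = 0"
  and comm: "p x y - p y x = br x y"
  and prelie: "p (br x y) z = p x (p y z) - p y (p x z)"
begin

lemma add_br1: "additive (\<lambda>x. br x z)" by unfold_locales (rule bra1)
lemma add_br2: "additive (\<lambda>x. br z x)" by unfold_locales (rule bra2)
lemma add_p1: "additive (\<lambda>x. p x z)" by unfold_locales (rule pa1)
lemma add_p2: "additive (\<lambda>x. p z x)" by unfold_locales (rule pa2)

lemmas brd1 = additive.diff[OF add_br1] and brd2 = additive.diff[OF add_br2]
  and pd1 = additive.diff[OF add_p1] and pd2 = additive.diff[OF add_p2]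
  and br01 = additive.zero[OF add_br1] and br02 = additive.zero[OF add_br2]
  and p01 = additive.zero[OF add_p1] and p02 = additive.zero[OF add_p2]
  and brn1 = additive.minus[OF add_br1] and brn2 = additive.minus[OF add_br2]
  and pn1 = additive.minus[OF add_p1] and pn2 = additive.minus[OF add_p2]

lemmas lin_simps[simp] = bra1 bra2 brs1 brs2 pa1 pa2 ps1 ps2 brd1 brd2 pd1 pd2
  br01 br02 p01 p02 brn1 brn2 pn1 pn2 nil

lemma antisym: "br y x = - br x y"
  using comm[of x y] comm[of y x] by (metis minus_diff_eq)

lemma nil2[simp]: "br x (br y z) = 0"
  using antisym[of "br y z" x] by simp

definition h where "h u = sc (1/2) u"

lemma half: "h (u + u) = u"
proof -
  have "h (u+u) = sc (1/2) u + sc (1/2) u" by (simp add: h_def scale_right_distrib)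
  also have "\<dots> = sc (1/2 + 1/2) u" by (simp only: scale_left_distrib)
  finally show ?thesis by simp
qed

lemma h_add[simp]: "h (u+v) = h u + h v" and h_diff[simp]: "h (u - v) = h u - h v"
  and h_0[simp]: "h 0 = 0" and h_neg[simp]: "h (-u) = - h u"
  by (simp_all add: h_def scale_right_distrib scale_right_diff_distrib)

lemma h_eq0: "h u = 0 \<longleftrightarrow> u = 0" by (simp add: h_def)

lemma c_eq: "sc (1/2) (p x y + p y x) = p x y - h (br x y)"
proof -
  have "p y x = p x y - br x y" using comm[of x y] by (simp add: algebra_simps)
  hence "p x y + p y x = (p x y + p x y) - br x y" by (simp add: algebra_simps)
  hence "sc (1/2) (p x y + p y x) = h ((p x y + p x y) - br x y)" by (simp add: h_def)
  also have "\<dots> = h (p x y + p x y) - h (br x y)" by (simp only: h_diff)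
  finally show ?thesis by (simp only: half)
qed

lemma h_sc[simp]: "h (sc c u) = sc c (h u)" by (simp add: h_def mult.commute)

lemma lin_p2: "Vector_Spaces.linear sc sc (p x)"
  by (simp add: Vector_Spaces.linear_iff vector_space_axioms)

lemma der_iff: "(\<forall>y z. sc (1/2) (p x (br y z) + p (br y z) x) =
     br (sc (1/2) (p x y + p y x)) z + br y (sc (1/2) (p x z + p z x)))
   \<longleftrightarrow> (\<forall>y z. p x (br y z) = br (p x y) z + br y (p x z))"
  by (simp add: c_eq h_def)

lemma part1: "CPA_structure sc br (\<lambda>x y. sc (1/2) (p x y + p y x)) \<longleftrightarrow> (\<forall>x. lie_derivation sc br (p x))"
proof
  assume "CPA_structure sc br (\<lambda>x y. sc (1/2) (p x y + p y x))"
  hence "\<forall>x y z. sc (1/2) (p x (br y z) + p (br y z) x) =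
     br (sc (1/2) (p x y + p y x)) z + br y (sc (1/2) (p x z + p z x))"
    unfolding CPA_structure_def by blast
  thus "\<forall>x. lie_derivation sc br (p x)"
    using der_iff lin_p2 unfolding lie_derivation_def by blast
next
  assume D: "\<forall>x. lie_derivation sc br (p x)"
  hence der: "p x (br y z) = br (p x y) z + br y (p x z)" for x y z
    unfolding lie_derivation_def by blast
  have l1: "Vector_Spaces.linear sc sc (\<lambda>y. p x y - h (br x y))" for x
  proof -
    have "p x (a + b) - h (br x (a + b)) = (p x a - h (br x a)) + (p x b - h (br x b))" for a b
      by (simp add: algebra_simps)
    moreover have "p x (sc c a) - h (br x (sc c a)) = sc c (p x a - h (br x a))" for c a
      by (simp add: scale_right_diff_distrib)
    ultimately show ?thesis using vector_space_axioms unfolding Vector_Spaces.linear_iff by blast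
  qed
  have l2: "Vector_Spaces.linear sc sc (\<lambda>x. p x y - h (br x y))" for y
  proof -
    have "p (a + b) y - h (br (a + b) y) = (p a y - h (br a y)) + (p b y - h (br b y))" for a b
      by (simp add: algebra_simps)
    moreover have "p (sc c a) y - h (br (sc c a) y) = sc c (p a y - h (br a y))" for c a
      by (simp add: scale_right_diff_distrib)
    ultimately show ?thesis using vector_space_axioms unfolding Vector_Spaces.linear_iff by blast
  qed
  have bil: "bilinear_prod sc (\<lambda>x y. sc (1/2) (p x y + p y x))"
    unfolding bilinear_prod_def c_eq using l1 l2 by blast
  have sym: "\<forall>x y. sc (1/2) (p x y + p y x) = sc (1/2) (p y x + p x y)"
    by (simp add: add.commute)
  have ax3: "\<forall>x y z. sc (1/2) (p x (br y z) + p (br y z) x) =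
     br (sc (1/2) (p x y + p y x)) z + br y (sc (1/2) (p x z + p z x))"
    using der_iff der by blast
  have ax2: "sc (1/2) (p (br x y) z + p z (br x y)) =
      sc (1/2) (p x (sc (1/2) (p y z + p z y)) + p (sc (1/2) (p y z + p z y)) x) -
      sc (1/2) (p y (sc (1/2) (p x z + p z x)) + p (sc (1/2) (p x z + p z x)) y)" for x y z
  proof -
    have key: "p x (br y z) + br x (p y z) - p y (br x z) - br y (p x z) = 0"
    proof -
      have "p x (br y z) + br x (p y z) - p y (br x z) - br y (p x z)
          = br (p x y - p y x) z"
        by (simp add: der algebra_simps)
      also have "\<dots> = 0" by (simp add: comm)
      finally show ?thesis .
    qed
    have ph: "p u (h v) = h (p u v)" "br u (h v) = h (br u v)" for u v
      by (simp_all add: h_def)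
    have r: "(p x (p y z - h (br y z)) - h (br x (p y z - h (br y z)))) -
          (p y (p x z - h (br x z)) - h (br y (p x z - h (br x z))))
        = (p x (p y z) - p y (p x z)) - h (p x (br y z) + br x (p y z) - p y (br x z) - br y (p x z))"
      by (simp add: ph algebra_simps)
    show ?thesis unfolding c_eq r key
      by (simp add: prelie)
  qed
  show "CPA_structure sc br (\<lambda>x y. sc (1/2) (p x y + p y x))"
    unfolding CPA_structure_def using bil sym ax3 ax2 by blast
qed

end

locale PL2 = PL + finite_dimensional_vector_space sc B for B +
  assumes der: "p x (br y z) = br (p x y) z + br y (p x z)"
  and cent: "lie_center br \<subseteq> span {br x y | x y. True}"
begin

abbreviation "Z \<equiv> lie_center br"

lemma inZ: "z \<in> Z \<longleftrightarrow> (\<forall>x. br z x = 0)" by (simp add: lie_center_def)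

lemma subZ: "subspace Z"
  by (auto simp: subspace_def lie_center_def)

lemma Zadd: "a \<in> Z \<Longrightarrow> b \<in> Z \<Longrightarrow> a + b \<in> Z" by (rule subspace_add[OF subZ])
lemma Zdiff: "a \<in> Z \<Longrightarrow> b \<in> Z \<Longrightarrow> a - b \<in> Z" by (rule subspace_diff[OF subZ])
lemma Zneg: "a \<in> Z \<Longrightarrow> - a \<in> Z" by (rule subspace_neg[OF subZ])
lemma Zsc: "a \<in> Z \<Longrightarrow> sc c a \<in> Z" by (rule subspace_scale[OF subZ])
lemma Z0: "0 \<in> Z" by (rule subspace_0[OF subZ])
lemma ztrans: "a - b \<in> Z \<Longrightarrow> b - c \<in> Z \<Longrightarrow> a - c \<in> Z"
  using Zadd[of "a - b" "b - c"] by simp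

lemma Zswap: "a - b \<in> Z \<Longrightarrow> b - a \<in> Z" using Zneg[of "a - b"] by simp

lemma brZ1: "z \<in> Z \<Longrightarrow> br z x = 0" by (simp add: inZ)
lemma brZ2: "z \<in> Z \<Longrightarrow> br x z = 0" using antisym[of z x] by (simp add: inZ)
lemma brZ: "br u v \<in> Z" by (simp add: inZ)

lemma pZ: "z \<in> Z \<Longrightarrow> p u z \<in> Z"
proof -
  assume z: "z \<in> Z"
  have "br (p u z) y = 0" for y
    using der[of u z y] z by (simp add: brZ1)
  thus ?thesis by (simp add: inZ)
qed

lemma Zcomm: "z \<in> Z \<Longrightarrow> p z u = p u z"
  using comm[of z u] by (simp add: brZ1)

lemma pZ1: "z \<in> Z \<Longrightarrow> p z u \<in> Z" by (simp add: Zcomm pZ)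

lemma commZ: "p u v - p v u \<in> Z" by (simp add: comm brZ)

lemma LZZ: assumes z: "z \<in> Z" and w: "w \<in> Z" shows "p z w = 0"
proof -
  have ws: "w \<in> span {br x y | x y. True}" using w cent by blast
  have sub: "subspace {w. p z w = 0}" unfolding subspace_def by simp
  have "p z (br a b) = 0" for a b
    using der[of z a b] pZ1[OF z, of a] pZ1[OF z, of b] by (simp add: brZ1 brZ2)
  hence "\<And>v. v \<in> {br x y | x y. True} \<Longrightarrow> v \<in> {w. p z w = 0}" by blast
  from span_subspace_induct[OF ws sub this] show ?thesis by simp
qed

lemma assocZ: "p a (p b c) - p (p a b) c \<in> Z"
proof -
  have 1: "p a (p b c) - p a (p c b) \<in> Z"
    using pZ[OF commZ[of b c], of a] by simp
  have 2: "p a (p c b) - p c (p a b) \<in> Z"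
    using pZ1[OF brZ[of a c], of b] by (simp add: prelie)
  have 3: "p c (p a b) - p (p a b) c \<in> Z" by (rule commZ)
  show ?thesis using ztrans[OF ztrans[OF 1 2] 3] .
qed

lemma modp: "z \<in> Z \<Longrightarrow> p y (p w z) = p (p y w) z"
proof -
  assume z: "z \<in> Z"
  have "p z (p y w) = p y (p z w)" using prelie[of z y w] z by (simp add: brZ1)
  moreover have "p (p y w) z = p z (p y w)" by (rule Zcomm[OF z, symmetric])
  moreover have "p z w = p w z" by (rule Zcomm[OF z])
  ultimately show ?thesis by simp
qed

lemma keyC: assumes e0: "p e e - e \<in> Z" shows "e \<in> Z"
proof -
  define z0 where "z0 = p e e - e"
  have z0Z: "z0 \<in> Z" using e0 z0_def by simp
  have ee: "p e e = e + z0" using z0_def by simp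
  have LL: "p e (p e w) = p e w" if "w \<in> Z" for w
    using modp[OF that, of e e] LZZ[OF z0Z that] by (simp add: ee)
  have Lsq: "p e (p e y) - p e y \<in> Z" for y
  proof -
    have eq: "p e (p e y) - p e y = (p e (p e y) - p (p e e) y) + p z0 y" by (simp add: ee)
    show ?thesis unfolding eq by (rule Zadd[OF assocZ pZ1[OF z0Z]])
  qed
  have "br e y = 0" for y
  proof -
    define u where "u = p e y"
    define w where "w = br e u"
    have wZ: "w \<in> Z" by (simp add: w_def brZ)
    have "br e (p e u) = br e u + br e (p e u - u)" by simp
    also have "br e (p e u - u) = 0" unfolding u_def by (rule brZ2[OF Lsq])
    finally have beu: "br e (p e u) = br e u" by simp
    have pw: "p e w = w + w"
      unfolding w_def using der[of e e u] by (simp add: ee beu brZ1[OF z0Z])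
    have "p e (p e w) = p e w" by (rule LL[OF wZ])
    hence "(w + w) + (w + w) = w + w" by (simp add: pw)
    hence ww: "w + w = 0" by (metis add_cancel_right_right)
    have "sc 2 w = w + w" using scale_left_distrib[of 1 1 w] by simp
    hence A: "w = 0" using ww by simp
    define y0 where "y0 = y - p e y"
    define w2 where "w2 = br e y0"
    have q0: "p e y0 \<in> Z" using Zneg[OF Lsq[of y]] by (simp add: y0_def)
    have w2Z: "w2 \<in> Z" by (simp add: w2_def brZ)
    have pw2: "p e w2 = w2"
      unfolding w2_def using der[of e e y0] by (simp add: ee brZ1[OF z0Z] brZ2[OF q0])
    define q where "q = p y0 e"
    have qq: "q = p e y0 - br e y0" using comm[of e y0] by (simp add: q_def algebra_simps)
    have qZ: "q \<in> Z" using qq Zdiff[OF q0 brZ] by simp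
    have "p w2 e = p e (p y0 e) - p y0 (p e e)" using prelie[of e y0 e] by (simp add: w2_def)
    hence "w2 = p e q - (q + p y0 z0)" using Zcomm[OF w2Z, of e] pw2 by (simp add: q_def ee)
    hence "p e w2 = p e (p e q) - p e q - p e (p y0 z0)" by simp
    also have "\<dots> = - p e (p y0 z0)" using LL[OF qZ] by simp
    also have "p e (p y0 z0) = 0" using modp[OF z0Z, of e y0] LZZ[OF q0 z0Z] by simp
    finally have B: "w2 = 0" using pw2 by simp
    have "br e y = br e u + br e y0" by (simp add: u_def y0_def)
    thus ?thesis using A B by (simp add: w_def w2_def)
  qed
  thus ?thesis by (simp add: inZ)
qed


lemma Tadd: "(p x ^^ k) (a + b) = (p x ^^ k) a + (p x ^^ k) b" by (induction k) simp_all
lemma Tdiff: "(p x ^^ k) (a - b) = (p x ^^ k) a - (p x ^^ k) b" by (induction k) simp_all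
lemma Tsc: "(p x ^^ k) (sc c a) = sc c ((p x ^^ k) a)" by (induction k) simp_all
lemma T0: "(p x ^^ k) 0 = 0" by (induction k) simp_all
lemma TZ: "z \<in> Z \<Longrightarrow> (p x ^^ k) z \<in> Z" by (induction k) (simp_all add: pZ)

lemma N1: assumes nv: "\<forall>v. (p x ^^ n) v \<in> Z" shows "nilpotent_map (p x)"
proof -
  have TiZ: "(p x ^^ i) b \<in> Z" if "n \<le> i" for i b
  proof -
    have "(p x ^^ i) b = (p x ^^ (i - n)) ((p x ^^ n) b)"
      using that by (metis funpow_add le_add_diff_inverse2 comp_apply)
    thus ?thesis using TZ nv by simp
  qed
  have lb: "\<forall>i j b c. 2*n \<le> i + j + k \<longrightarrow> (p x ^^ k) (br ((p x ^^ i) b) ((p x ^^ j) c)) = 0" for k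
  proof (induction k)
    case 0 show ?case
    proof (intro allI impI)
      fix i j b c assume "2*n \<le> i + j + 0"
      hence "n \<le> i \<or> n \<le> j" by arith
      thus "(p x ^^ 0) (br ((p x ^^ i) b) ((p x ^^ j) c)) = 0" using TiZ brZ1 brZ2 by auto
    qed
  next
    case (Suc k) show ?case
    proof (intro allI impI)
      fix i j b c assume h: "2*n \<le> i + j + Suc k"
      have "(p x ^^ Suc k) (br ((p x ^^ i) b) ((p x ^^ j) c))
           = (p x ^^ k) (p x (br ((p x ^^ i) b) ((p x ^^ j) c)))"
        by (simp add: funpow_Suc_right del: funpow.simps)
      also have "\<dots> = (p x ^^ k) (br ((p x ^^ Suc i) b) ((p x ^^ j) c))
                   + (p x ^^ k) (br ((p x ^^ i) b) ((p x ^^ Suc j) c))"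
        by (simp add: der Tadd)
      also have "\<dots> = 0"
        using Suc.IH[rule_format, of "Suc i" j b c] Suc.IH[rule_format, of i "Suc j" b c] h by simp
      finally show "(p x ^^ Suc k) (br ((p x ^^ i) b) ((p x ^^ j) c)) = 0" .
    qed
  qed
  have b0: "(p x ^^ (2*n)) (br b c) = 0" for b c
    using lb[of "2*n", rule_format, of 0 0 b c] by simp
  have zz: "(p x ^^ (2*n)) z = 0" if "z \<in> Z" for z
  proof -
    have zs: "z \<in> span {br x y | x y. True}" using that cent by blast
    have sub: "subspace {w. (p x ^^ (2*n)) w = 0}" unfolding subspace_def by (simp add: Tadd Tsc T0)
    have "\<And>v. v \<in> {br x y | x y. True} \<Longrightarrow> v \<in> {w. (p x ^^ (2*n)) w = 0}" using b0 by blast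
    from span_subspace_induct[OF zs sub this] show ?thesis by simp
  qed
  have "(p x ^^ (2*n + n)) v = 0" for v
  proof -
    have "(p x ^^ (2*n + n)) v = (p x ^^ (2*n)) ((p x ^^ n) v)" by (simp only: funpow_add comp_apply)
    thus ?thesis using zz[OF nv[rule_format, of v]] by simp
  qed
  thus ?thesis unfolding nilpotent_map_def by (intro exI[of _ "2*n+n"]) auto
qed

lemma stab: "\<exists>n. \<forall>u. (\<exists>v. u - (p x ^^ n) v \<in> Z) \<longrightarrow> (\<exists>v. u - (p x ^^ Suc n) v \<in> Z)"
proof (rule ccontr)
  define W where "W k = {u. \<exists>v. u - (p x ^^ k) v \<in> Z}" for k
  assume na: "\<not> ?thesis"
  have subW: "subspace (W k)" for k
    unfolding subspace_def W_def
  proof (intro conjI ballI allI)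
    show "0 \<in> {u. \<exists>v. u - (p x ^^ k) v \<in> Z}" using Z0 T0 by (auto intro!: exI[of _ 0])
  next
    fix a b assume "a \<in> {u. \<exists>v. u - (p x ^^ k) v \<in> Z}" "b \<in> {u. \<exists>v. u - (p x ^^ k) v \<in> Z}"
    then obtain va vb where "a - (p x ^^ k) va \<in> Z" "b - (p x ^^ k) vb \<in> Z" by auto
    hence "(a + b) - (p x ^^ k) (va + vb) \<in> Z" using Zadd by (fastforce simp: Tadd algebra_simps)
    thus "a + b \<in> {u. \<exists>v. u - (p x ^^ k) v \<in> Z}" by blast
  next
    fix c a assume "a \<in> {u. \<exists>v. u - (p x ^^ k) v \<in> Z}"
    then obtain va where "a - (p x ^^ k) va \<in> Z" by auto
    hence "sc c a - (p x ^^ k) (sc c va) \<in> Z" using Zsc by (fastforce simp: Tsc scale_right_diff_distrib[symmetric])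
    thus "sc c a \<in> {u. \<exists>v. u - (p x ^^ k) v \<in> Z}" by blast
  qed
  have mono: "W (Suc k) \<subseteq> W k" for k
  proof
    fix u assume "u \<in> W (Suc k)"
    then obtain v where "u - (p x ^^ Suc k) v \<in> Z" by (auto simp: W_def)
    hence "u - (p x ^^ k) (p x v) \<in> Z" by (simp add: funpow_Suc_right del: funpow.simps)
    thus "u \<in> W k" by (auto simp: W_def)
  qed
  have ps: "W (Suc k) \<subset> W k" for k
    using na mono[of k] unfolding W_def by blast
  have dl: "dim (W (Suc k)) < dim (W k)" for k
  proof -
    have "span (W (Suc k)) \<subset> span (W k)" using ps[of k] by (simp add: span_eq_iff[THEN iffD2, OF subW])
    thus ?thesis by (rule dim_psubset)
  qed
  have "dim (W k) + k \<le> dim (W 0)" for k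
  proof (induction k)
    case (Suc k) thus ?case using dl[of k] by simp
  qed simp
  from this[of "Suc (dim (W 0))"] show False by simp
qed

lemma E: assumes st: "\<forall>u. (\<exists>v. u - (p x ^^ n) v \<in> Z) \<longrightarrow> (\<exists>v. u - (p x ^^ Suc n) v \<in> Z)"
  and nz: "\<not>(\<forall>v. (p x ^^ n) v \<in> Z)"
  shows "\<exists>e. p e e - e \<in> Z \<and> e \<notin> Z"
proof -
  define W where "W = {u. \<exists>v. u - (p x ^^ n) v \<in> Z}"
  have surj1: "\<exists>v\<in>W. u - p x v \<in> Z" if uW: "u \<in> W" for u
  proof -
    obtain w where w: "u - (p x ^^ Suc n) w \<in> Z" using st uW unfolding W_def by blast
    have "(p x ^^ n) w \<in> W" unfolding W_def using Z0 by (auto intro!: exI[of _ w])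
    moreover have "u - p x ((p x ^^ n) w) \<in> Z" using w by simp
    ultimately show ?thesis by blast
  qed
  have surjm: "\<exists>v\<in>W. u - (p x ^^ m) v \<in> Z" if "u \<in> W" for u m
  proof (induction m)
    case 0 show ?case using that Z0 by (auto intro!: bexI[of _ u])
  next
    case (Suc m)
    then obtain v where v: "v \<in> W" "u - (p x ^^ m) v \<in> Z" by blast
    obtain v' where v': "v' \<in> W" "v - p x v' \<in> Z" using surj1[OF v(1)] by blast
    have eq: "u - (p x ^^ Suc m) v' = (u - (p x ^^ m) v) + (p x ^^ m) (v - p x v')"
      by (simp add: funpow_Suc_right Tdiff del: funpow.simps)
    have "u - (p x ^^ Suc m) v' \<in> Z" unfolding eq by (rule Zadd[OF v(2) TZ[OF v'(2), where x=x and k=m]])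
    thus ?case using v'(1) by blast
  qed
  have pk: "p ((p x ^^ k) x) u - (p x ^^ Suc k) u \<in> Z" for k u
  proof (induction k arbitrary: u)
    case 0 show ?case using Z0 by simp
  next
    case (Suc k)
    define w where "w = (p x ^^ k) x"
    have 1: "p x (p w u) - p (p x w) u \<in> Z" by (rule assocZ)
    have 2: "p x (p w u) - p x ((p x ^^ Suc k) u) \<in> Z"
      using pZ[OF Suc.IH[of u], of x] by (simp add: w_def)
    have "p (p x w) u - (p x ^^ Suc (Suc k)) u = - (p x (p w u) - p (p x w) u) + (p x (p w u) - p x ((p x ^^ Suc k) u))"
      by simp
    hence "p (p x w) u - (p x ^^ Suc (Suc k)) u \<in> Z" using Zadd[OF Zneg[OF 1] 2] by simp
    thus ?case by (simp add: w_def)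
  qed
  define p0 where "p0 = (p x ^^ n) x"
  have p0W: "p0 \<in> W" unfolding W_def p0_def using Z0 by (auto intro!: exI[of _ x])
  obtain e where eW: "e \<in> W" and e1: "p0 - (p x ^^ Suc n) e \<in> Z" using surjm[OF p0W] by blast
  have e2: "p0 - p p0 e \<in> Z" using ztrans[OF e1 Zswap[OF pk[of n e]]] by (simp add: p0_def)
  have ident: "p e u - u \<in> Z" if uW: "u \<in> W" for u
  proof -
    obtain v where v: "u - (p x ^^ Suc n) v \<in> Z" using surjm[OF uW, of "Suc n"] by blast
    have uv: "u - p p0 v \<in> Z" using ztrans[OF v Zswap[OF pk[of n v]]] by (simp add: p0_def)
    have s1: "p e u - p e (p p0 v) \<in> Z" using pZ[OF uv, of e] by simp
    have s2: "p e (p p0 v) - p (p e p0) v \<in> Z" by (rule assocZ)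
    have s3: "p (p e p0) v - p (p p0 e) v \<in> Z" using pZ1[OF commZ[of e p0], of v] by simp
    have s4: "p (p p0 e) v - p p0 v \<in> Z" using pZ1[OF Zneg[OF e2], of v] by simp
    have s5: "p p0 v - u \<in> Z" using Zneg[OF uv] by simp
    show ?thesis using ztrans[OF ztrans[OF ztrans[OF ztrans[OF s1 s2] s3] s4] s5] .
  qed
  have ee: "p e e - e \<in> Z" by (rule ident[OF eW])
  have "e \<notin> Z"
  proof
    assume eZ: "e \<in> Z"
    have "u \<in> Z" if uW: "u \<in> W" for u
    proof -
      have "u = p e u - (p e u - u)" by simp
      thus ?thesis using Zdiff[OF pZ1[OF eZ] ident[OF uW]] by metis
    qed
    moreover have "(p x ^^ n) v \<in> W" for v unfolding W_def using Z0 by (auto intro!: exI[of _ v])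
    ultimately show False using nz by blast
  qed
  thus ?thesis using ee by blast
qed

lemma part2: "nilpotent_map (p x)"
proof -
  obtain n where st: "\<forall>u. (\<exists>v. u - (p x ^^ n) v \<in> Z) \<longrightarrow> (\<exists>v. u - (p x ^^ Suc n) v \<in> Z)"
    using stab by blast
  show ?thesis
  proof (cases "\<forall>v. (p x ^^ n) v \<in> Z")
    case True thus ?thesis by (rule N1)
  next
    case False
    then obtain e where "p e e - e \<in> Z" "e \<notin> Z" using E[OF st] by blast
    thus ?thesis using keyC by blast
  qed
qed

end


theorem mainTheorem6:
  fixes sc :: "'k::field_char_0 \<Rightarrow> 'v::ab_group_add \<Rightarrow> 'v"
    and B :: "'v set"
    and br p :: "'v \<Rightarrow> 'v \<Rightarrow> 'v"
  assumes "finite_dimensional_vector_space sc B"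
    and "lie_algebra sc br"
    and "two_step_nilpotent br"
    and "pre_lie_structure sc br p"
  shows "(CPA_structure sc br (\<lambda>x y. sc (1/2) (p x y + p y x))
            \<longleftrightarrow> (\<forall>x. lie_derivation sc br (p x)))
       \<and> ((\<forall>x. lie_derivation sc br (p x)) \<and> lie_center br \<subseteq> derived_algebra sc br
            \<longrightarrow> (\<forall>x. nilpotent_map (p x)))"
proof -
  interpret fd: finite_dimensional_vector_space sc B by fact
  have bb: "bilinear_prod sc br" using assms(2) by (simp add: lie_algebra_def)
  have bp: "bilinear_prod sc p" and cm: "\<And>x y. p x y - p y x = br x y"
    and pl: "\<And>x y z. p (br x y) z = p x (p y z) - p y (p x z)"
    using assms(4) by (simp_all add: pre_lie_structure_def)
  have nl: "\<And>x y z. br (br x y) z = 0" using assms(3) by (simp add: two_step_nilpotent_def)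
  interpret pl: PL sc br p
  proof (unfold_locales)
    fix x y z c
    show "br (x + y) z = br x z + br y z" "br x (y + z) = br x y + br x z"
      "br (sc c x) y = sc c (br x y)" "br x (sc c y) = sc c (br x y)"
      using bb by (simp_all add: bilinear_prod_def Vector_Spaces.linear_iff)
    show "p (x + y) z = p x z + p y z" "p x (y + z) = p x y + p x z"
      "p (sc c x) y = sc c (p x y)" "p x (sc c y) = sc c (p x y)"
      using bp by (simp_all add: bilinear_prod_def Vector_Spaces.linear_iff)
    show "br (br x y) z = 0" by (rule nl)
    show "p x y - p y x = br x y" by (rule cm)
    show "p (br x y) z = p x (p y z) - p y (p x z)" by (rule pl)
  qed
  show ?thesis
  proof (intro conjI impI)
    show "CPA_structure sc br (\<lambda>x y. sc (1/2) (p x y + p y x)) \<longleftrightarrow> (\<forall>x. lie_derivation sc br (p x))"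
      by (rule pl.part1)
  next
    assume a: "(\<forall>x. lie_derivation sc br (p x)) \<and> lie_center br \<subseteq> derived_algebra sc br"
    interpret pl2: PL2 sc br p B
    proof (unfold_locales)
      fix x y z
      show "p x (br y z) = br (p x y) z + br y (p x z)" using a by (simp add: lie_derivation_def)
      show "lie_center br \<subseteq> fd.span {br x y |x y. True}"
        using a by (simp add: derived_algebra_def)
    qed
    show "\<forall>x. nilpotent_map (p x)" using pl2.part2 by blast
  qed
qed

end
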